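(* Let $\phi$ be an $n$-cube USO and let $\psi$ be a kaleidoscope for $\phi$. Let $F\subseteq[2n]$ and let $\psi'$ be the mirror image of $\psi$ along dimensions $F$. Then $\psi'$ contains $\phi$; that is, there exists $V\subseteq\{n+1,\dots,2n\}$ such that $\psi'(U)_L=\phi(U_L)$ for all $U$ with $V\subseteq U\subseteq V\cup[n]$.
   Context: For sets $U,V$ let $U\oplus V=(U\cup V)\setminus(U\cap V)$. An $m$-cube orientation on the vertex set of all subsets of $[m]$ has, for each vertex $V$ and $i\in[m]$, exactly one of the directed edges $V\to V\oplus\{i\}$, $V\oplus\{i\}\to V$; it is identified with its outmap $V\mapsto\{i: V\to V\oplus\{i\}\}$. It is a unique sink orientation (USO) if every face (subgraph induced by an interval $\{X: A\subseteq X\subseteq B\}$) has exactly one sink. For $V\subseteq[2n]$ write $V_L=V\cap[n]$ and $V_H=\{i-n: i\in V\cap\{n+1,\dots,2n\}\}$. A $2n$-cube USO $\psi$ is a kaleidoscope for the $n$-cube USO $\phi$ if $\psi(V)_L=\phi(V_L\oplus V_H)$ for all $V\subseteq[2n]$. For an $m$-cube USO $\psi$ and $F\subseteq[m]$, the mirror image of $\psi$ along dimensions $F$ is the USO $\psi'$ with $\psi'(V)=\psi(V\oplus F)$ for all $V\subseteq[m]$. *)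

theory Defs
  imports Main
begin

text \<open>Vertices of the m-cube are subsets of [m] = {1..m}; an orientation is given by its
outmap, a function from vertex sets to sets of dimensions.\<close>

definition sdiff :: "nat set \<Rightarrow> nat set \<Rightarrow> nat set" where
  "sdiff U V = (U \<union> V) - (U \<inter> V)"

definition cube_orientation :: "nat \<Rightarrow> (nat set \<Rightarrow> nat set) \<Rightarrow> bool" where
  "cube_orientation m psi \<longleftrightarrow> (\<forall>V. V \<subseteq> {1..m} \<longrightarrow> psi V \<subseteq> {1..m})"

text \<open>X is a sink of the face {X. A <= X <= B}: no outgoing edge inside the face.\<close>
definition is_face_sink :: "(nat set \<Rightarrow> nat set) \<Rightarrow> nat set \<Rightarrow> nat set \<Rightarrow> nat set \<Rightarrow> bool" where
  "is_face_sink psi A B X \<longleftrightarrow> A \<subseteq> X \<and> X \<subseteq> B \<and> psi X \<inter> (B - A) = {}"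

definition uso :: "nat \<Rightarrow> (nat set \<Rightarrow> nat set) \<Rightarrow> bool" where
  "uso m psi \<longleftrightarrow> cube_orientation m psi \<and>
     (\<forall>A B. A \<subseteq> B \<and> B \<subseteq> {1..m} \<longrightarrow> (\<exists>!X. is_face_sink psi A B X))"

definition low_part :: "nat \<Rightarrow> nat set \<Rightarrow> nat set" where
  "low_part n V = V \<inter> {1..n}"

definition high_part :: "nat \<Rightarrow> nat set \<Rightarrow> nat set" where
  "high_part n V = (\<lambda>i. i - n) ` (V \<inter> {n+1..2*n})"

definition kaleidoscope :: "nat \<Rightarrow> (nat set \<Rightarrow> nat set) \<Rightarrow> (nat set \<Rightarrow> nat set) \<Rightarrow> bool" where
  "kaleidoscope n phi psi \<longleftrightarrow> uso (2*n) psi \<and>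
     (\<forall>V. V \<subseteq> {1..2*n} \<longrightarrow> low_part n (psi V) = phi (sdiff (low_part n V) (high_part n V)))"

definition mirror :: "nat set \<Rightarrow> (nat set \<Rightarrow> nat set) \<Rightarrow> (nat set \<Rightarrow> nat set)" where
  "mirror F psi = (\<lambda>V. psi (sdiff V F))"

end

theory Submission
  imports Defs
begin

lemma high_char: "high_part n S = {x. x \<in> {1..n} \<and> x + n \<in> S}"
proof (rule set_eqI, rule iffI)
  fix x assume "x \<in> high_part n S"
  then show "x \<in> {x. x \<in> {1..n} \<and> x + n \<in> S}" unfolding high_part_def by auto
next
  fix x assume "x \<in> {x. x \<in> {1..n} \<and> x + n \<in> S}"
  then have "x + n \<in> S \<inter> {n+1..2*n}" "x = (x+n) - n" by auto
  then show "x \<in> high_part n S" unfolding high_part_def by blast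
qed

theorem lemma6p5:
  fixes n :: nat and phi psi :: "nat set \<Rightarrow> nat set" and F :: "nat set"
  assumes "uso n phi"
    and "kaleidoscope n phi psi"
    and "F \<subseteq> {1..2*n}"
  shows "\<exists>V. V \<subseteq> {n+1..2*n} \<and>
           (\<forall>U. V \<subseteq> U \<and> U \<subseteq> V \<union> {1..n} \<longrightarrow>
                low_part n (mirror F psi U) = phi (low_part n U))"
proof -
  define G where "G = sdiff (low_part n F) (high_part n F)"
  have G1: "G \<subseteq> {1..n}" unfolding G_def sdiff_def low_part_def high_char by auto
  define V where "V = (\<lambda>i. i + n) ` G"
  have HV: "V \<subseteq> {n+1..2*n}" using G1 unfolding V_def by auto
  show ?thesis
  proof (intro exI conjI allI impI)
    show "V \<subseteq> {n+1..2*n}" by (rule HV)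
  next
    fix U assume U: "V \<subseteq> U \<and> U \<subseteq> V \<union> {1..n}"
    have sub: "sdiff U F \<subseteq> {1..2*n}" proof -
      have "V \<union> {1..n} \<subseteq> {1..2*n}" using HV by auto
      then have "U \<subseteq> {1..2*n}" using U by blast
      then show ?thesis using assms(3) unfolding sdiff_def by auto
    qed
    have hU: "high_part n U = G"
    proof (rule set_eqI)
      fix x
      show "x \<in> high_part n U \<longleftrightarrow> x \<in> G"
      proof
        assume "x \<in> high_part n U"
        then have x: "x \<in> {1..n}" "x + n \<in> U" by (auto simp: high_char)
        then have "x + n \<in> V" using U by auto
        then show "x \<in> G" unfolding V_def by auto
      next
        assume "x \<in> G"
        then show "x \<in> high_part n U" using G1 U unfolding V_def high_char by auto
      qed
    qed
    have hX: "high_part n (sdiff U F) = sdiff G (high_part n F)"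
      using hU unfolding high_char sdiff_def by auto
    have lX: "low_part n (sdiff U F) = sdiff (low_part n U) (low_part n F)"
      unfolding low_part_def sdiff_def by auto
    have eq: "sdiff (low_part n (sdiff U F)) (high_part n (sdiff U F)) = low_part n U"
      unfolding hX lX by (auto simp: G_def sdiff_def)
    show "low_part n (mirror F psi U) = phi (low_part n U)"
      using assms(2) sub eq unfolding kaleidoscope_def mirror_def by metis
  qed
qed

end
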